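(* Let $Z=(Z_i)_{i=1}^n$ be a stationary ergodic Markov chain on a finite state space $\mathcal S$ with equilibrium distribution $\pi$, and let $\pi_{\min}:=\min_{x\in\mathcal S}\pi_x$. Then $$\Psi(Z)\le\Bigl(\log_2\frac1{\pi_{\min}}+3\Bigr)t_{\mathrm{mix}}.$$
   Context: $\psi(V\mid W):=\sup\bigl|\frac{\mathbb P(A\cap B)-\mathbb P(A)\mathbb P(B)}{\mathbb P(A)\mathbb P(B)}\bigr|$ over $A\in\sigma(V),B\in\sigma(W)$ with positive probability; $\Psi(Z):=\min\{j\ge1:\psi(Z_{i+j}\mid Z_i)\le1/4\text{ for all }i\in\{1,\dots,n-j\}\}$. Total variation distance $d_{TV}(\mu,\nu):=\max_{A\subseteq\mathcal S}|\mu(A)-\nu(A)|$; $d(t):=\sup_{i\in\mathcal S}d_{TV}(\mathbb P(Z_t=\cdot\mid Z_0=i),\pi)$ (for the chain with the given transition matrix); $t_{\mathrm{mix}}:=\min\{t\ge1:d(t)\le1/4\}$. *)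

theory Defs
  imports "HOL-Probability.Probability"
begin

definition stochastic_matrix :: "'s set \<Rightarrow> ('s \<Rightarrow> 's \<Rightarrow> real) \<Rightarrow> bool" where
  "stochastic_matrix S P \<longleftrightarrow>
     (\<forall>x\<in>S. \<forall>y\<in>S. 0 \<le> P x y) \<and> (\<forall>x\<in>S. (\<Sum>y\<in>S. P x y) = 1)"

fun mpow :: "'s set \<Rightarrow> ('s \<Rightarrow> 's \<Rightarrow> real) \<Rightarrow> nat \<Rightarrow> 's \<Rightarrow> 's \<Rightarrow> real" where
  "mpow S P 0 x y = (if x = y then 1 else 0)"
| "mpow S P (Suc t) x y = (\<Sum>z\<in>S. mpow S P t x z * P z y)"

definition irreducible_chain :: "'s set \<Rightarrow> ('s \<Rightarrow> 's \<Rightarrow> real) \<Rightarrow> bool" where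
  "irreducible_chain S P \<longleftrightarrow> (\<forall>x\<in>S. \<forall>y\<in>S. \<exists>t. mpow S P t x y > 0)"

definition aperiodic_chain :: "'s set \<Rightarrow> ('s \<Rightarrow> 's \<Rightarrow> real) \<Rightarrow> bool" where
  "aperiodic_chain S P \<longleftrightarrow> (\<forall>x\<in>S. Gcd {t. t \<ge> 1 \<and> mpow S P t x x > 0} = 1)"

definition ergodic_chain :: "'s set \<Rightarrow> ('s \<Rightarrow> 's \<Rightarrow> real) \<Rightarrow> bool" where
  "ergodic_chain S P \<longleftrightarrow> irreducible_chain S P \<and> aperiodic_chain S P"

definition stationary_distribution :: "'s set \<Rightarrow> ('s \<Rightarrow> 's \<Rightarrow> real) \<Rightarrow> ('s \<Rightarrow> real) \<Rightarrow> bool" where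
  "stationary_distribution S P \<pi> \<longleftrightarrow>
     (\<forall>x\<in>S. 0 \<le> \<pi> x) \<and> (\<Sum>x\<in>S. \<pi> x) = 1 \<and>
     (\<forall>y\<in>S. (\<Sum>x\<in>S. \<pi> x * P x y) = \<pi> y)"

definition dTV :: "'s set \<Rightarrow> ('s \<Rightarrow> real) \<Rightarrow> ('s \<Rightarrow> real) \<Rightarrow> real" where
  "dTV S \<mu> \<nu> = Max {\<bar>(\<Sum>x\<in>A. \<mu> x) - (\<Sum>x\<in>A. \<nu> x)\<bar> | A. A \<subseteq> S}"

definition dist_eq :: "'s set \<Rightarrow> ('s \<Rightarrow> 's \<Rightarrow> real) \<Rightarrow> ('s \<Rightarrow> real) \<Rightarrow> nat \<Rightarrow> real" where
  "dist_eq S P \<pi> t = Sup ((\<lambda>i. dTV S (mpow S P t i) \<pi>) ` S)"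

definition t_mix :: "'s set \<Rightarrow> ('s \<Rightarrow> 's \<Rightarrow> real) \<Rightarrow> ('s \<Rightarrow> real) \<Rightarrow> nat" where
  "t_mix S P \<pi> = (LEAST t. t \<ge> 1 \<and> dist_eq S P \<pi> t \<le> 1/4)"

text \<open>Z i (1 <= i <= n) are random variables with values in S on the probability space M,
  whose finite-dimensional distributions are those of the Markov chain with transition
  matrix P started in pi (hence stationary when pi is stationary).\<close>
definition markov_chain_rvs ::
  "'a measure \<Rightarrow> 's set \<Rightarrow> ('s \<Rightarrow> 's \<Rightarrow> real) \<Rightarrow> ('s \<Rightarrow> real) \<Rightarrow> nat \<Rightarrow> (nat \<Rightarrow> 'a \<Rightarrow> 's) \<Rightarrow> bool" where
  "markov_chain_rvs M S P \<pi> n Z \<longleftrightarrow>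
     prob_space M \<and>
     (\<forall>i\<in>{1..n}. Z i \<in> measurable M (count_space S)) \<and>
     (\<forall>k\<in>{1..n}. \<forall>x. (\<forall>i\<in>{1..k}. x i \<in> S) \<longrightarrow>
        measure M {\<omega>\<in>space M. \<forall>i\<in>{1..k}. Z i \<omega> = x i}
          = \<pi> (x 1) * (\<Prod>i\<in>{1..<k}. P (x i) (x (Suc i))))"

text \<open>sigma(V) for V : M -> S (with the discrete sigma-algebra on S) is the sigma-algebra
  of vimage_algebra (space M) V (count_space S).\<close>
definition psi_coeff :: "'a measure \<Rightarrow> 's set \<Rightarrow> ('a \<Rightarrow> 's) \<Rightarrow> ('a \<Rightarrow> 's) \<Rightarrow> real" where
  "psi_coeff M S V W = Sup {\<bar>(measure M (A \<inter> B) - measure M A * measure M B)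
                              / (measure M A * measure M B)\<bar> | A B.
      A \<in> sets (vimage_algebra (space M) V (count_space S)) \<and>
      B \<in> sets (vimage_algebra (space M) W (count_space S)) \<and>
      measure M A > 0 \<and> measure M B > 0}"

definition Psi_coeff :: "'a measure \<Rightarrow> 's set \<Rightarrow> nat \<Rightarrow> (nat \<Rightarrow> 'a \<Rightarrow> 's) \<Rightarrow> nat" where
  "Psi_coeff M S n Z = (LEAST j. j \<ge> 1 \<and>
      (\<forall>i\<in>{1..n-j}. psi_coeff M S (Z (i+j)) (Z i) \<le> 1/4))"

end

theory Submission
  imports Defs
begin


lemma mpow_nonneg:
  assumes "stochastic_matrix S P" "y \<in> S"
  shows "0 \<le> mpow S P t x y"
  using assms(2)
proof (induction t arbitrary: y)
  case 0 then show ?case by simp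
next
  case (Suc t)
  have "0 \<le> mpow S P t x z * P z y" if "z \<in> S" for z
    using Suc that assms(1) unfolding stochastic_matrix_def by auto
  then show ?case by (simp add: sum_nonneg)
qed

lemma mpow_rowsum:
  assumes "finite S" "stochastic_matrix S P" "x \<in> S"
  shows "(\<Sum>y\<in>S. mpow S P t x y) = 1"
proof (induction t)
  case 0 then show ?case using assms by (simp add: sum.delta)
next
  case (Suc t)
  have "(\<Sum>y\<in>S. mpow S P (Suc t) x y) = (\<Sum>z\<in>S. mpow S P t x z * (\<Sum>y\<in>S. P z y))"
    by (simp add: sum_distrib_left) (rule sum.swap)
  also have "\<dots> = (\<Sum>z\<in>S. mpow S P t x z)"
    using assms(2) unfolding stochastic_matrix_def by simp
  finally show ?case using Suc by simp
qed

lemma mpow_add: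
  assumes "finite S" "y \<in> S"
  shows "mpow S P (s + t) x y = (\<Sum>z\<in>S. mpow S P s x z * mpow S P t z y)"
  using assms(2)
proof (induction t arbitrary: y)
  case 0 then show ?case using assms(1) by (simp add: if_distrib sum.delta' cong: if_cong)
next
  case (Suc t)
  have "mpow S P (s + Suc t) x y = (\<Sum>w\<in>S. mpow S P (s + t) x w * P w y)" by simp
  also have "\<dots> = (\<Sum>w\<in>S. (\<Sum>z\<in>S. mpow S P s x z * mpow S P t z w) * P w y)"
    using Suc by (intro sum.cong) auto
  also have "\<dots> = (\<Sum>z\<in>S. mpow S P s x z * (\<Sum>w\<in>S. mpow S P t z w * P w y))"
    by (simp add: sum_distrib_left sum_distrib_right mult.assoc) (rule sum.swap)
  finally show ?case by simp
qed

lemma stat_mpow: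
  assumes "finite S" "stationary_distribution S P \<pi>" "y \<in> S"
  shows "(\<Sum>x\<in>S. \<pi> x * mpow S P t x y) = \<pi> y"
  using assms(3)
proof (induction t arbitrary: y)
  case 0 then show ?case using assms(1) by (simp add: if_distrib sum.delta cong: if_cong)
next
  case (Suc t)
  have "(\<Sum>x\<in>S. \<pi> x * mpow S P (Suc t) x y) = (\<Sum>z\<in>S. (\<Sum>x\<in>S. \<pi> x * mpow S P t x z) * P z y)"
    by (simp add: sum_distrib_left sum_distrib_right mult.assoc mult.left_commute) (rule sum.swap)
  also have "\<dots> = (\<Sum>z\<in>S. \<pi> z * P z y)" using Suc by (intro sum.cong) auto
  also have "\<dots> = \<pi> y" using assms(2) Suc unfolding stationary_distribution_def by auto
  finally show ?case .
qed

definition L1 :: "'s set \<Rightarrow> ('s \<Rightarrow> real) \<Rightarrow> ('s \<Rightarrow> real) \<Rightarrow> real" where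
  "L1 S f g = (\<Sum>y\<in>S. \<bar>f y - g y\<bar>)"

lemma posneg_parts:
  assumes "finite S" "(\<Sum>y\<in>S. f y) = (\<Sum>y\<in>S. g y)"
  shows "(\<Sum>y\<in>S. max (g y - f y) 0) = (\<Sum>y\<in>S. max (f y - g y) 0)"
    and "L1 S f g = 2 * (\<Sum>y\<in>S. max (f y - g y) 0)"
proof -
  have e: "f y - g y = max (f y - g y) 0 - max (g y - f y) 0" for y by (simp add: max_def)
  have "(\<Sum>y\<in>S. f y - g y) = 0" using assms(2) by (simp add: sum_subtractf)
  hence "(\<Sum>y\<in>S. max (f y - g y) 0 - max (g y - f y) 0) = 0" using e by simp
  thus A: "(\<Sum>y\<in>S. max (g y - f y) 0) = (\<Sum>y\<in>S. max (f y - g y) 0)" by (simp add: sum_subtractf)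
  have a: "\<bar>f y - g y\<bar> = max (f y - g y) 0 + max (g y - f y) 0" for y by (simp add: max_def)
  show "L1 S f g = 2 * (\<Sum>y\<in>S. max (f y - g y) 0)"
    unfolding L1_def a sum.distrib A by simp
qed

lemma L1_pointwise:
  assumes "finite S" "(\<Sum>y\<in>S. f y) = (\<Sum>y\<in>S. g y)" "y \<in> S"
  shows "\<bar>f y - g y\<bar> \<le> L1 S f g / 2"
proof -
  have p: "max (f y - g y) 0 \<le> (\<Sum>y\<in>S. max (f y - g y) 0)"
    by (rule member_le_sum) (use assms in auto)
  have m: "max (g y - f y) 0 \<le> (\<Sum>y\<in>S. max (g y - f y) 0)"
    by (rule member_le_sum) (use assms in auto)
  have "\<bar>f y - g y\<bar> = max (max (f y - g y) 0) (max (g y - f y) 0)" by (simp add: max_def)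
  thus ?thesis using p m posneg_parts[OF assms(1,2)] by simp
qed

lemma L1_triangle: "L1 S f h \<le> L1 S f g + L1 S g h"
  unfolding L1_def sum.distrib[symmetric] by (intro sum_mono) simp

lemma L1_sym: "L1 S f g = L1 S g f"
  unfolding L1_def by (simp add: abs_minus_commute)

lemma dTV_le_L1:
  assumes "finite S" "(\<Sum>y\<in>S. f y) = (\<Sum>y\<in>S. g y)"
  shows "dTV S f g \<le> L1 S f g / 2"
proof -
  have fin: "finite {\<bar>(\<Sum>x\<in>A. f x) - (\<Sum>x\<in>A. g x)\<bar> | A. A \<subseteq> S}"
    using assms(1) by simp
  have ne: "{\<bar>(\<Sum>x\<in>A. f x) - (\<Sum>x\<in>A. g x)\<bar> | A. A \<subseteq> S} \<noteq> {}" by blast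
  have "\<bar>(\<Sum>x\<in>A. f x) - (\<Sum>x\<in>A. g x)\<bar> \<le> L1 S f g / 2" if A: "A \<subseteq> S" for A
  proof -
    have fA: "finite A" using A assms(1) finite_subset by blast
    have e: "(\<Sum>x\<in>A. f x) - (\<Sum>x\<in>A. g x) = (\<Sum>x\<in>A. max (f x - g x) 0) - (\<Sum>x\<in>A. max (g x - f x) 0)"
      by (simp add: sum_subtractf[symmetric]) (intro sum.cong, auto simp: max_def)
    have p: "(\<Sum>x\<in>A. max (f x - g x) 0) \<le> (\<Sum>x\<in>S. max (f x - g x) 0)"
      by (rule sum_mono2) (use assms A in auto)
    have m: "(\<Sum>x\<in>A. max (g x - f x) 0) \<le> (\<Sum>x\<in>S. max (g x - f x) 0)"
      by (rule sum_mono2) (use assms A in auto)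
    have p0: "0 \<le> (\<Sum>x\<in>A. max (f x - g x) 0)" by (rule sum_nonneg) simp
    have m0: "0 \<le> (\<Sum>x\<in>A. max (g x - f x) 0)" by (rule sum_nonneg) simp
    show ?thesis unfolding e using p m p0 m0 posneg_parts[OF assms] by linarith
  qed
  then show ?thesis unfolding dTV_def using fin ne by (subst Max_le_iff) auto
qed

lemma L1_le_dTV:
  assumes "finite S" "(\<Sum>y\<in>S. f y) = (\<Sum>y\<in>S. g y)"
  shows "L1 S f g / 2 \<le> dTV S f g"
proof -
  define A where "A = {y\<in>S. g y \<le> f y}"
  have fin: "finite {\<bar>(\<Sum>x\<in>A. f x) - (\<Sum>x\<in>A. g x)\<bar> | A. A \<subseteq> S}"
    using assms(1) by simp
  have "(\<Sum>x\<in>S. max (f x - g x) 0) = (\<Sum>x\<in>A. max (f x - g x) 0)"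
    unfolding A_def by (rule sum.mono_neutral_right) (use assms in auto)
  also have "\<dots> = (\<Sum>x\<in>A. f x) - (\<Sum>x\<in>A. g x)"
    by (simp add: sum_subtractf[symmetric]) (intro sum.cong, auto simp: A_def)
  also have "\<dots> \<le> \<bar>(\<Sum>x\<in>A. f x) - (\<Sum>x\<in>A. g x)\<bar>" by simp
  also have "\<dots> \<le> dTV S f g" unfolding dTV_def
    by (rule Max_ge[OF fin]) (auto simp: A_def)
  finally show ?thesis using posneg_parts(2)[OF assms] by simp
qed

lemma L1_contract:
  assumes S: "finite S" and sums: "(\<Sum>y\<in>S. f y) = (\<Sum>y\<in>S. g y)"
    and q: "\<And>z z'. z \<in> S \<Longrightarrow> z' \<in> S \<Longrightarrow> L1 S (q z) (q z') \<le> 2 * b"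
  shows "L1 S (\<lambda>y. \<Sum>z\<in>S. f z * q z y) (\<lambda>y. \<Sum>z\<in>S. g z * q z y) \<le> b * L1 S f g"
proof -
  define p where "p z = max (f z - g z) 0" for z
  define m where "m z = max (g z - f z) 0" for z
  define c where "c = (\<Sum>z\<in>S. p z)"
  have cm: "(\<Sum>z\<in>S. m z) = c" using posneg_parts(1)[OF S sums] by (simp add: p_def m_def c_def)
  have L: "L1 S f g = 2 * c" using posneg_parts(2)[OF S sums] by (simp add: p_def c_def)
  have p0: "p z \<ge> 0" "m z \<ge> 0" for z by (auto simp: p_def m_def)
  have fg: "f z - g z = p z - m z" for z by (simp add: p_def m_def max_def)
  have c0: "c \<ge> 0" unfolding c_def by (rule sum_nonneg) (use p0 in auto)
  have key: "c * ((\<Sum>z\<in>S. f z * q z y) - (\<Sum>z\<in>S. g z * q z y))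
      = (\<Sum>z\<in>S. \<Sum>z'\<in>S. p z * m z' * (q z y - q z' y))" for y
  proof -
    have d: "(\<Sum>z\<in>S. f z * q z y) - (\<Sum>z\<in>S. g z * q z y) = (\<Sum>z\<in>S. p z * q z y) - (\<Sum>z\<in>S. m z * q z y)"
      by (simp add: sum_subtractf[symmetric] left_diff_distrib[symmetric] fg)
    have r: "(\<Sum>z\<in>S. \<Sum>z'\<in>S. p z * m z' * (q z y - q z' y))
        = (\<Sum>z\<in>S. p z * q z y) * (\<Sum>z'\<in>S. m z') - (\<Sum>z\<in>S. p z) * (\<Sum>z'\<in>S. m z' * q z' y)"
      by (simp add: sum_subtractf right_diff_distrib sum_distrib_left sum_distrib_right algebra_simps)
         (subst sum.swap, simp)
    show ?thesis unfolding d r cm c_def[symmetric] by (simp only: right_diff_distrib mult.commute)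
  qed
  have "c * L1 S (\<lambda>y. \<Sum>z\<in>S. f z * q z y) (\<lambda>y. \<Sum>z\<in>S. g z * q z y)
      = (\<Sum>y\<in>S. \<bar>\<Sum>z\<in>S. \<Sum>z'\<in>S. p z * m z' * (q z y - q z' y)\<bar>)"
    unfolding L1_def sum_distrib_left
  proof (rule sum.cong[OF refl])
    fix y show "c * \<bar>(\<Sum>z\<in>S. f z * q z y) - (\<Sum>z\<in>S. g z * q z y)\<bar> = \<bar>\<Sum>z\<in>S. \<Sum>z'\<in>S. p z * m z' * (q z y - q z' y)\<bar>"
    proof -
      have "c * \<bar>(\<Sum>z\<in>S. f z * q z y) - (\<Sum>z\<in>S. g z * q z y)\<bar> = \<bar>c * ((\<Sum>z\<in>S. f z * q z y) - (\<Sum>z\<in>S. g z * q z y))\<bar>"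
        by (simp only: abs_mult abs_of_nonneg[OF c0])
      also have "\<dots> = \<bar>\<Sum>z\<in>S. \<Sum>z'\<in>S. p z * m z' * (q z y - q z' y)\<bar>" by (simp only: key)
      finally show ?thesis .
    qed
  qed
  also have "\<dots> \<le> (\<Sum>y\<in>S. \<Sum>z\<in>S. \<Sum>z'\<in>S. p z * m z' * \<bar>q z y - q z' y\<bar>)"
  proof (rule sum_mono)
    fix y
    have "\<bar>\<Sum>z\<in>S. \<Sum>z'\<in>S. p z * m z' * (q z y - q z' y)\<bar> \<le> (\<Sum>z\<in>S. \<bar>\<Sum>z'\<in>S. p z * m z' * (q z y - q z' y)\<bar>)"
      by (rule sum_abs)
    also have "\<dots> \<le> (\<Sum>z\<in>S. \<Sum>z'\<in>S. \<bar>p z * m z' * (q z y - q z' y)\<bar>)"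
      by (intro sum_mono sum_abs)
    also have "\<dots> = (\<Sum>z\<in>S. \<Sum>z'\<in>S. p z * m z' * \<bar>q z y - q z' y\<bar>)"
      using p0 by (simp add: abs_mult)
    finally show "\<bar>\<Sum>z\<in>S. \<Sum>z'\<in>S. p z * m z' * (q z y - q z' y)\<bar> \<le> (\<Sum>z\<in>S. \<Sum>z'\<in>S. p z * m z' * \<bar>q z y - q z' y\<bar>)" .
  qed
  also have "\<dots> = (\<Sum>z\<in>S. \<Sum>z'\<in>S. p z * m z' * L1 S (q z) (q z'))"
    unfolding L1_def sum_distrib_left
    by (subst sum.swap, rule sum.cong, simp, subst sum.swap, simp)
  also have "\<dots> \<le> (\<Sum>z\<in>S. \<Sum>z'\<in>S. p z * m z' * (2 * b))"
    using p0 q by (intro sum_mono mult_left_mono) auto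
  also have "\<dots> = (\<Sum>z\<in>S. \<Sum>z'\<in>S. p z * m z') * (2 * b)"
    by (simp add: sum_distrib_right)
  also have "\<dots> = (\<Sum>z\<in>S. p z) * (\<Sum>z'\<in>S. m z') * (2 * b)"
    by (simp add: sum_product)
  also have "\<dots> = c * (c * (2 * b))"
    using cm c_def by simp
  finally have *: "c * L1 S (\<lambda>y. \<Sum>z\<in>S. f z * q z y) (\<lambda>y. \<Sum>z\<in>S. g z * q z y) \<le> c * (c * (2 * b))" .
  show ?thesis
  proof (cases "c = 0")
    case True
    have "p z = 0" "m z = 0" if "z \<in> S" for z
      using True cm S that p0 unfolding c_def by (auto simp: sum_nonneg_eq_0_iff)
    hence "f z = g z" if "z \<in> S" for z using fg[of z] that by simp
    hence "L1 S (\<lambda>y. \<Sum>z\<in>S. f z * q z y) (\<lambda>y. \<Sum>z\<in>S. g z * q z y) = 0"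
      unfolding L1_def by (auto intro!: sum.neutral sum.cong)
    thus ?thesis using L True by simp
  next
    case False
    with * c0 have "L1 S (\<lambda>y. \<Sum>z\<in>S. f z * q z y) (\<lambda>y. \<Sum>z\<in>S. g z * q z y) \<le> c * (2 * b)"
      by (simp add: mult_le_cancel_left)
    thus ?thesis using L by (simp add: algebra_simps)
  qed
qed

lemma L1_cong:
  assumes "\<And>y. y \<in> S \<Longrightarrow> f y = f' y" "\<And>y. y \<in> S \<Longrightarrow> g y = g' y"
  shows "L1 S f g = L1 S f' g'"
  unfolding L1_def using assms by (intro sum.cong) auto

lemma L1_rows_le2:
  assumes "finite S" "stochastic_matrix S P" "x \<in> S" "x' \<in> S"
  shows "L1 S (mpow S P t x) (mpow S P t x') \<le> 2"
proof -
  have "L1 S (mpow S P t x) (mpow S P t x') \<le> (\<Sum>y\<in>S. mpow S P t x y + mpow S P t x' y)"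
    unfolding L1_def using mpow_nonneg[OF assms(2)] by (intro sum_mono) (smt (verit))
  also have "\<dots> = 2" using mpow_rowsum[OF assms(1,2)] assms(3,4) by (simp add: sum.distrib)
  finally show ?thesis .
qed

lemma decay:
  assumes S: "finite S" and st: "stochastic_matrix S P" and b0: "0 \<le> \<beta>"
    and hT: "\<And>x x'. x \<in> S \<Longrightarrow> x' \<in> S \<Longrightarrow> L1 S (mpow S P T x) (mpow S P T x') \<le> 2 * \<beta>"
  shows "x \<in> S \<Longrightarrow> x' \<in> S \<Longrightarrow> L1 S (mpow S P (k * T) x) (mpow S P (k * T) x') \<le> 2 * \<beta> ^ k"
proof (induction k arbitrary: x x')
  case 0
  have "L1 S (mpow S P 0 x) (mpow S P 0 x') \<le> 2" by (rule L1_rows_le2[OF S st 0])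
  then show ?case by (simp del: mpow.simps)
next
  case (Suc k)
  have "L1 S (mpow S P (Suc k * T) x) (mpow S P (Suc k * T) x')
      = L1 S (\<lambda>y. \<Sum>z\<in>S. mpow S P (k * T) x z * mpow S P T z y) (\<lambda>y. \<Sum>z\<in>S. mpow S P (k * T) x' z * mpow S P T z y)"
  proof -
    have e: "Suc k * T = k * T + T" by simp
    show ?thesis by (rule L1_cong; simp only: e mpow_add[OF S])
  qed
  also have "\<dots> \<le> \<beta> * L1 S (mpow S P (k * T) x) (mpow S P (k * T) x')"
    by (rule L1_contract[OF S _ hT]) (use mpow_rowsum[OF S st] Suc.prems in auto)
  also have "\<dots> \<le> \<beta> * (2 * \<beta> ^ k)"
    using Suc b0 by (intro mult_left_mono) auto
  finally show ?case by simp
qed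

lemma pointwise_pi:
  assumes S: "finite S" and st: "stochastic_matrix S P" and sd: "stationary_distribution S P \<pi>"
    and h: "\<And>x'. x' \<in> S \<Longrightarrow> L1 S (mpow S P t x) (mpow S P t x') \<le> 2 * e"
    and x: "x \<in> S" and y: "y \<in> S"
  shows "\<bar>mpow S P t x y - \<pi> y\<bar> \<le> e"
proof -
  have pis: "(\<Sum>x'\<in>S. \<pi> x') = 1" "\<And>x'. x' \<in> S \<Longrightarrow> 0 \<le> \<pi> x'"
    using sd unfolding stationary_distribution_def by auto
  have "mpow S P t x y - \<pi> y = (\<Sum>x'\<in>S. \<pi> x' * (mpow S P t x y - mpow S P t x' y))"
    using stat_mpow[OF S sd y, of t] pis(1)
    by (simp add: right_diff_distrib sum_subtractf sum_distrib_right[symmetric])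
  also have "\<bar>\<dots>\<bar> \<le> (\<Sum>x'\<in>S. \<bar>\<pi> x' * (mpow S P t x y - mpow S P t x' y)\<bar>)" by (rule sum_abs)
  also have "\<dots> \<le> (\<Sum>x'\<in>S. \<pi> x' * e)"
  proof (rule sum_mono)
    fix x' assume x': "x' \<in> S"
    have "\<bar>mpow S P t x y - mpow S P t x' y\<bar> \<le> L1 S (mpow S P t x) (mpow S P t x') / 2"
      by (rule L1_pointwise[OF S _ y]) (use mpow_rowsum[OF S st] x x' in auto)
    also have "\<dots> \<le> e" using h[OF x'] by simp
    finally show "\<bar>\<pi> x' * (mpow S P t x y - mpow S P t x' y)\<bar> \<le> \<pi> x' * e"
      using pis(2)[OF x'] by (simp add: abs_mult mult_left_mono)
  qed
  also have "\<dots> = e" using pis(1) by (simp add: sum_distrib_right[symmetric])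
  finally show ?thesis .
qed

lemma dTV_pi:
  assumes S: "finite S" and st: "stochastic_matrix S P" and sd: "stationary_distribution S P \<pi>"
    and h: "\<And>x'. x' \<in> S \<Longrightarrow> L1 S (mpow S P t x) (mpow S P t x') \<le> 2 * e"
    and x: "x \<in> S"
  shows "dTV S (mpow S P t x) \<pi> \<le> e"
proof -
  have pis: "(\<Sum>x'\<in>S. \<pi> x') = 1" "\<And>x'. x' \<in> S \<Longrightarrow> 0 \<le> \<pi> x'"
    using sd unfolding stationary_distribution_def by auto
  have d: "\<bar>mpow S P t x y - \<pi> y\<bar> \<le> (\<Sum>x'\<in>S. \<pi> x' * \<bar>mpow S P t x y - mpow S P t x' y\<bar>)"
    if y: "y \<in> S" for y
  proof -
    have "mpow S P t x y - \<pi> y = (\<Sum>x'\<in>S. \<pi> x' * (mpow S P t x y - mpow S P t x' y))"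
      using stat_mpow[OF S sd y, of t] pis(1)
      by (simp add: right_diff_distrib sum_subtractf sum_distrib_right[symmetric])
    also have "\<bar>\<dots>\<bar> \<le> (\<Sum>x'\<in>S. \<bar>\<pi> x' * (mpow S P t x y - mpow S P t x' y)\<bar>)" by (rule sum_abs)
    also have "\<dots> = (\<Sum>x'\<in>S. \<pi> x' * \<bar>mpow S P t x y - mpow S P t x' y\<bar>)"
      using pis(2) by (intro sum.cong) (auto simp: abs_mult)
    finally show ?thesis .
  qed
  have "L1 S (mpow S P t x) \<pi> \<le> (\<Sum>y\<in>S. \<Sum>x'\<in>S. \<pi> x' * \<bar>mpow S P t x y - mpow S P t x' y\<bar>)"
    unfolding L1_def using d by (rule sum_mono)
  also have "\<dots> = (\<Sum>x'\<in>S. \<pi> x' * L1 S (mpow S P t x) (mpow S P t x'))"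
    unfolding L1_def sum_distrib_left by (rule sum.swap)
  also have "\<dots> \<le> (\<Sum>x'\<in>S. \<pi> x' * (2 * e))"
    using h pis(2) by (intro sum_mono mult_left_mono) auto
  also have "\<dots> = 2 * e" using pis(1) by (simp add: sum_distrib_right[symmetric])
  finally have "L1 S (mpow S P t x) \<pi> \<le> 2 * e" .
  moreover have "dTV S (mpow S P t x) \<pi> \<le> L1 S (mpow S P t x) \<pi> / 2"
    by (rule dTV_le_L1[OF S]) (use mpow_rowsum[OF S st x] pis in auto)
  ultimately show ?thesis by simp
qed

lemma dist_eq_le:
  assumes "S \<noteq> {}" "\<And>x. x \<in> S \<Longrightarrow> dTV S (mpow S P t x) \<pi> \<le> e"
  shows "dist_eq S P \<pi> t \<le> e"
  unfolding dist_eq_def using assms by (intro cSUP_least) auto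

lemma dTV_le_dist_eq:
  assumes "finite S" "x \<in> S"
  shows "dTV S (mpow S P t x) \<pi> \<le> dist_eq S P \<pi> t"
  unfolding dist_eq_def using assms by (intro cSUP_upper) (auto intro: bdd_above_finite)

lemma tmix_L1:
  assumes S: "finite S" and st: "stochastic_matrix S P" and sd: "stationary_distribution S P \<pi>"
    and d: "dist_eq S P \<pi> t \<le> 1/4" and x: "x \<in> S" and x': "x' \<in> S"
  shows "L1 S (mpow S P t x) (mpow S P t x') \<le> 2 * (1/2)"
proof -
  have pis: "(\<Sum>x'\<in>S. \<pi> x') = 1"
    using sd unfolding stationary_distribution_def by auto
  have "L1 S (mpow S P t z) \<pi> \<le> 1/2" if z: "z \<in> S" for z
  proof -
    have "L1 S (mpow S P t z) \<pi> / 2 \<le> dTV S (mpow S P t z) \<pi>"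
      by (rule L1_le_dTV[OF S]) (use mpow_rowsum[OF S st z] pis in auto)
    also have "\<dots> \<le> 1/4" using dTV_le_dist_eq[OF S z, of P t \<pi>] d by simp
    finally show ?thesis by simp
  qed
  hence "L1 S (mpow S P t x) \<pi> \<le> 1/2" "L1 S (mpow S P t x') \<pi> \<le> 1/2" using x x' by auto
  hence "L1 S (mpow S P t x) \<pi> + L1 S \<pi> (mpow S P t x') \<le> 1"
    using L1_sym[of S \<pi> "mpow S P t x'"] by linarith
  thus ?thesis using L1_triangle[of S "mpow S P t x" "mpow S P t x'" \<pi>] by simp
qed



lemma semigroup_mult:
  fixes A :: "nat set"
  assumes add: "\<And>a b. a \<in> A \<Longrightarrow> b \<in> A \<Longrightarrow> a + b \<in> A" and a: "a \<in> A" and k: "k \<ge> 1"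
  shows "k * a \<in> A"
  using k
proof (induction k rule: dec_induct)
  case base then show ?case using a by simp
next
  case (step k) then show ?case using add a by (simp add: add.commute)
qed

lemma semigroup_large:
  fixes A :: "nat set"
  assumes pos: "\<And>a. a \<in> A \<Longrightarrow> a \<ge> 1"
    and add: "\<And>a b. a \<in> A \<Longrightarrow> b \<in> A \<Longrightarrow> a + b \<in> A"
    and g: "Gcd A = 1"
  shows "\<exists>N. \<forall>m\<ge>N. m \<in> A"
proof -
  have "A \<noteq> {}" using g by auto
  then obtain a0 where a0: "a0 \<in> A" by blast
  define D where "D = {d::nat. d > 0 \<and> (\<exists>a\<in>A. a + d \<in> A)}"
  have "a0 \<in> D" unfolding D_def using a0 add pos by fastforce
  define d0 where "d0 = (LEAST d. d \<in> D)"
  have d0D: "d0 \<in> D" unfolding d0_def by (rule LeastI) fact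
  have d0min: "\<And>d. d \<in> D \<Longrightarrow> d0 \<le> d" unfolding d0_def by (rule Least_le)
  from d0D obtain a where a: "a \<in> A" "a + d0 \<in> A" "d0 > 0" unfolding D_def by blast
  have "d0 = 1"
  proof (rule ccontr)
    assume "d0 \<noteq> 1"
    hence d1: "d0 > 1" using a(3) by simp
    have "\<exists>c\<in>A. \<not> d0 dvd c"
    proof (rule ccontr)
      assume "\<not> (\<exists>c\<in>A. \<not> d0 dvd c)"
      hence "d0 dvd Gcd A" by (auto intro: Gcd_greatest)
      thus False using g d1 by simp
    qed
    then obtain c where c: "c \<in> A" "\<not> d0 dvd c" by blast
    define q where "q = c div d0"
    define r where "r = c mod d0"
    have r: "0 < r" "r < d0" "c = q * d0 + r"
      using c(2) a(3) unfolding q_def r_def by (auto simp: dvd_eq_mod_eq_0)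
    have q1: "1 \<le> q + 1" by simp
    have m1: "(q+1) * (a + d0) \<in> A" by (rule semigroup_mult[OF add a(2) q1])
    have "(q+1) * a \<in> A" by (rule semigroup_mult[OF add a(1) q1])
    hence m2: "(q+1) * a + c \<in> A" using add c(1) by blast
    have eq: "(q+1) * (a + d0) = ((q+1) * a + c) + (d0 - r)"
      using r by (simp add: algebra_simps)
    have m3: "((q+1) * a + c) + (d0 - r) \<in> A" using m1 unfolding eq .
    have "d0 - r \<in> D" unfolding D_def using r bexI[where P="\<lambda>x. x + (d0 - r) \<in> A", OF m3 m2] by simp
    hence "d0 \<le> d0 - r" by (rule d0min)
    thus False using r by simp
  qed
  with a have a1: "a + 1 \<in> A" by simp
  have a_pos: "a \<ge> 1" using pos a(1) .
  have "m \<in> A" if m: "m \<ge> a * a" for m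
  proof -
    define s where "s = m - a * a"
    define q where "q = s div a"
    define r where "r = s mod a"
    have rl: "r < a" unfolding r_def using a_pos by simp
    have meq: "m = (a - r + q) * a + r * (a + 1)"
    proof -
      have "s = q * a + r" unfolding q_def r_def by simp
      hence "m = a * a + q * a + r" using m s_def by simp
      also have "\<dots> = (a - r + q) * a + r * (a + 1)"
      proof -
        have h: "a * r \<le> a * a" using rl by simp
        show ?thesis using rl by (simp add: algebra_simps diff_mult_distrib) (use h in linarith)
      qed
      finally show ?thesis .
    qed
    have k1: "1 \<le> a - r + q" using rl by simp
    have A1: "(a - r + q) * a \<in> A" by (rule semigroup_mult[OF add a(1) k1])
    show ?thesis
    proof (cases "r = 0")
      case True thus ?thesis using meq A1 by simp
    next
      case False
      have k2: "1 \<le> r" using False by simp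
      have "r * (a + 1) \<in> A" by (rule semigroup_mult[OF add a1 k2])
      thus ?thesis using meq A1 add by simp
    qed
  qed
  thus ?thesis by blast
qed

lemma mpow_ge:
  assumes S: "finite S" and st: "stochastic_matrix S P" and y: "y \<in> S" and z: "z \<in> S"
  shows "mpow S P s x z * mpow S P t z y \<le> mpow S P (s + t) x y"
proof -
  have "mpow S P s x z * mpow S P t z y \<le> (\<Sum>w\<in>S. mpow S P s x w * mpow S P t w y)"
    by (rule member_le_sum[OF z]) (use mpow_nonneg[OF st] y S in auto)
  thus ?thesis using mpow_add[OF S y] by simp
qed

lemma finite_thresholds:
  fixes Q :: "'a \<Rightarrow> nat \<Rightarrow> bool"
  assumes "finite F" "\<And>p. p \<in> F \<Longrightarrow> \<exists>N. \<forall>m\<ge>N. Q p m"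
  shows "\<exists>N. \<forall>m\<ge>N. \<forall>p\<in>F. Q p m"
  using assms
proof (induction F rule: finite_induct)
  case empty then show ?case by auto
next
  case (insert p F)
  then obtain N1 where N1: "\<forall>m\<ge>N1. \<forall>p\<in>F. Q p m" by auto
  obtain N2 where N2: "\<forall>m\<ge>N2. Q p m" using insert.prems[OF insertI1] by blast
  show ?case
  proof (intro exI[of _ "max N1 N2"] allI impI ballI)
    fix m q assume m: "max N1 N2 \<le> m" and q: "q \<in> insert p F"
    have "N1 \<le> m" "N2 \<le> m" using m by auto
    thus "Q q m" using N1 N2 q by blast
  qed
qed

lemma primitive:
  assumes S: "finite S" and st: "stochastic_matrix S P" and erg: "ergodic_chain S P"
  shows "\<exists>N\<ge>1. \<forall>x\<in>S. \<forall>y\<in>S. mpow S P N x y > 0"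
proof -
  have aper: "\<exists>N. \<forall>m\<ge>N. mpow S P m x x > 0" if x: "x \<in> S" for x
  proof -
    define A where "A = {t. t \<ge> 1 \<and> mpow S P t x x > 0}"
    have "Gcd A = 1" using erg x unfolding ergodic_chain_def aperiodic_chain_def A_def by auto
    moreover have "a + b \<in> A" if "a \<in> A" "b \<in> A" for a b
    proof -
      have "0 < mpow S P a x x * mpow S P b x x" using that unfolding A_def by simp
      also have "\<dots> \<le> mpow S P (a + b) x x" by (rule mpow_ge[OF S st x x])
      finally show ?thesis using that unfolding A_def by simp
    qed
    moreover have "\<And>a. a \<in> A \<Longrightarrow> a \<ge> 1" unfolding A_def by simp
    ultimately obtain N where "\<forall>m\<ge>N. m \<in> A" using semigroup_large[of A] by blast
    thus ?thesis unfolding A_def by auto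
  qed
  have pp: "\<exists>N. \<forall>m\<ge>N. mpow S P m (fst p) (snd p) > 0" if p: "p \<in> S \<times> S" for p
  proof -
    obtain x y where xy: "p = (x, y)" "x \<in> S" "y \<in> S" using p by auto
    obtain t where t: "mpow S P t x y > 0" using erg xy unfolding ergodic_chain_def irreducible_chain_def by blast
    obtain N where N: "\<forall>m\<ge>N. mpow S P m x x > 0" using aper[OF xy(2)] by blast
    have "mpow S P m x y > 0" if m: "m \<ge> N + t" for m
    proof -
      have "0 < mpow S P (m - t) x x * mpow S P t x y" using N m t by simp
      also have "\<dots> \<le> mpow S P (m - t + t) x y" by (rule mpow_ge[OF S st xy(3) xy(2)])
      finally show ?thesis using m by simp
    qed
    thus ?thesis using xy by auto
  qed
  have "\<exists>N. \<forall>m\<ge>N. \<forall>p\<in>S \<times> S. mpow S P m (fst p) (snd p) > 0"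
    by (rule finite_thresholds) (use pp S in auto)
  then obtain N where N: "\<forall>m\<ge>N. \<forall>p\<in>S \<times> S. mpow S P m (fst p) (snd p) > 0" by blast
  show ?thesis by (rule exI[of _ "max N 1"]) (use N in auto)
qed

lemma tmix_exists:
  assumes S: "finite S" "S \<noteq> {}" and st: "stochastic_matrix S P" and erg: "ergodic_chain S P"
    and sd: "stationary_distribution S P \<pi>"
  shows "\<exists>t. t \<ge> 1 \<and> dist_eq S P \<pi> t \<le> 1/4"
proof -
  obtain N where N: "N \<ge> 1" "\<And>x y. x \<in> S \<Longrightarrow> y \<in> S \<Longrightarrow> mpow S P N x y > 0"
    using primitive[OF S(1) st erg] by blast
  define \<delta> where "\<delta> = Min ((\<lambda>p. mpow S P N (fst p) (snd p)) ` (S \<times> S))"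
  have fin: "finite ((\<lambda>p. mpow S P N (fst p) (snd p)) ` (S \<times> S))" using S by simp
  have ne: "(\<lambda>p. mpow S P N (fst p) (snd p)) ` (S \<times> S) \<noteq> {}" using S by simp
  have d0: "\<delta> > 0" unfolding \<delta>_def using N fin ne by (subst Min_gr_iff) auto
  have dle: "\<delta> \<le> mpow S P N x y" if "x \<in> S" "y \<in> S" for x y
    unfolding \<delta>_def using fin that by (intro Min_le) force+
  have L: "L1 S (mpow S P N x) (mpow S P N x') \<le> 2 * (1 - \<delta>)" if x: "x \<in> S" "x' \<in> S" for x x'
  proof -
    have "L1 S (mpow S P N x) (mpow S P N x') \<le> (\<Sum>y\<in>S. mpow S P N x y + mpow S P N x' y - 2 * \<delta>)"
      unfolding L1_def
    proof (rule sum_mono)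
      fix y assume y: "y \<in> S"
      have a: "\<delta> \<le> mpow S P N x y" "\<delta> \<le> mpow S P N x' y" using dle x y by auto
      show "\<bar>mpow S P N x y - mpow S P N x' y\<bar> \<le> mpow S P N x y + mpow S P N x' y - 2 * \<delta>"
        unfolding abs_le_iff using a by linarith
    qed
    also have "\<dots> = 2 - 2 * \<delta> * card S"
      using mpow_rowsum[OF S(1) st] x by (simp add: sum.distrib sum_subtractf)
    also have "\<dots> \<le> 2 - 2 * \<delta>"
    proof -
      have "card S \<ge> 1" using S by (simp add: Suc_leI card_gt_0_iff)
      hence "\<delta> * 1 \<le> \<delta> * card S" using d0 by (intro mult_left_mono) auto
      thus ?thesis by simp
    qed
    finally show ?thesis by simp
  qed
  obtain x0 where x0: "x0 \<in> S" using S by blast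
  have "0 \<le> L1 S (mpow S P N x0) (mpow S P N x0)" unfolding L1_def by simp
  hence b0: "0 \<le> 1 - \<delta>" using L[OF x0 x0] by simp
  obtain k where k: "(1 - \<delta>) ^ k < 1/4" using real_arch_pow_inv[of "1/4" "1 - \<delta>"] d0 by auto
  have k1: "k \<noteq> 0" using k by (cases k) auto
  have "dTV S (mpow S P (k * N) x) \<pi> \<le> (1 - \<delta>) ^ k" if x: "x \<in> S" for x
    by (rule dTV_pi[OF S(1) st sd _ x]) (rule decay[OF S(1) st b0 L x], auto)
  hence "dist_eq S P \<pi> (k * N) \<le> (1 - \<delta>) ^ k" by (intro dist_eq_le S(2))
  moreover have "k * N \<ge> 1" using k1 N(1) by simp
  ultimately show ?thesis using k by (intro exI[of _ "k * N"]) auto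
qed



lemma sum_PiE_insert:
  assumes "a \<notin> F"
  shows "(\<Sum>x\<in>PiE (insert a F) C. h x) = (\<Sum>x\<in>PiE F C. \<Sum>y\<in>C a. h (x(a := y)))"
proof -
  have inj: "inj_on (\<lambda>(y, g). g(a := y)) (C a \<times> PiE F C)"
  proof (rule inj_onI, clarify)
    fix y g y' g' assume h: "y \<in> C a" "g \<in> PiE F C" "y' \<in> C a" "g' \<in> PiE F C" "g(a := y) = g'(a := y')"
    have "y = y'" using fun_cong[OF h(5), of a] by simp
    moreover have "g = g'"
    proof
      fix z show "g z = g' z"
      proof (cases "z = a")
        case True thus ?thesis using h(2,4) assms by (auto simp: PiE_def extensional_def)
      next
        case False thus ?thesis using fun_cong[OF h(5), of z] by simp
      qed
    qed
    ultimately show "y = y' \<and> g = g'" by simp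
  qed
  have "(\<Sum>x\<in>PiE (insert a F) C. h x) = (\<Sum>p\<in>C a \<times> PiE F C. h ((\<lambda>(y, g). g(a := y)) p))"
    unfolding PiE_insert_eq by (subst sum.reindex[OF inj]) simp
  also have "\<dots> = (\<Sum>y\<in>C a. \<Sum>x\<in>PiE F C. h (x(a := y)))"
    by (subst sum.cartesian_product) (simp add: case_prod_unfold)
  also have "\<dots> = (\<Sum>x\<in>PiE F C. \<Sum>y\<in>C a. h (x(a := y)))" by (rule sum.swap)
  finally show ?thesis .
qed

fun fwd :: "('s \<Rightarrow> 's \<Rightarrow> real) \<Rightarrow> ('s \<Rightarrow> real) \<Rightarrow> (nat \<Rightarrow> 's set) \<Rightarrow> nat \<Rightarrow> 's \<Rightarrow> real" where
  "fwd P \<pi> C 0 y = 0"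
| "fwd P \<pi> C (Suc k) y = (if y \<in> C (Suc k) then (if k = 0 then \<pi> y else (\<Sum>z\<in>C k. fwd P \<pi> C k z * P z y)) else 0)"

definition wpath :: "('s \<Rightarrow> 's \<Rightarrow> real) \<Rightarrow> ('s \<Rightarrow> real) \<Rightarrow> nat \<Rightarrow> (nat \<Rightarrow> 's) \<Rightarrow> real" where
  "wpath P \<pi> k x = \<pi> (x 1) * (\<Prod>i\<in>{1..<k}. P (x i) (x (Suc i)))"

lemma path_sum:
  assumes "k \<ge> 1"
  shows "(\<Sum>x\<in>PiE {1..k} C. wpath P \<pi> k x * g (x k)) = (\<Sum>y\<in>C k. fwd P \<pi> C k y * g y)"
  using assms
proof (induction k arbitrary: g rule: dec_induct)
  case base
  have "{1..1::nat} = insert 1 {}" by auto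
  hence "(\<Sum>x\<in>PiE {1..1} C. wpath P \<pi> 1 x * g (x 1)) = (\<Sum>y\<in>C 1. \<pi> y * g y)"
    by (simp add: sum_PiE_insert wpath_def)
  thus ?case by simp
next
  case (step k)
  have ins: "{1..Suc k} = insert (Suc k) {1..k}" by auto
  have w: "wpath P \<pi> (Suc k) (x(Suc k := y)) = wpath P \<pi> k x * P (x k) y" for x y
  proof -
    have "(\<Prod>i\<in>{1..<Suc k}. P ((x(Suc k := y)) i) ((x(Suc k := y)) (Suc i)))
        = (\<Prod>i\<in>{1..<k}. P ((x(Suc k := y)) i) ((x(Suc k := y)) (Suc i))) * P (x k) y"
      using step.hyps by (subst prod.atLeastLessThan_Suc) auto
    also have "(\<Prod>i\<in>{1..<k}. P ((x(Suc k := y)) i) ((x(Suc k := y)) (Suc i)))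
        = (\<Prod>i\<in>{1..<k}. P (x i) (x (Suc i)))" by (intro prod.cong) auto
    finally show ?thesis unfolding wpath_def using step.hyps by simp
  qed
  have "(\<Sum>x\<in>PiE {1..Suc k} C. wpath P \<pi> (Suc k) x * g (x (Suc k)))
      = (\<Sum>x\<in>PiE {1..k} C. \<Sum>y\<in>C (Suc k). wpath P \<pi> (Suc k) (x(Suc k := y)) * g y)"
    unfolding ins by (subst sum_PiE_insert) auto
  also have "\<dots> = (\<Sum>x\<in>PiE {1..k} C. wpath P \<pi> k x * (\<Sum>y\<in>C (Suc k). P (x k) y * g y))"
    unfolding w by (simp add: sum_distrib_left mult.assoc)
  also have "\<dots> = (\<Sum>z\<in>C k. fwd P \<pi> C k z * (\<Sum>y\<in>C (Suc k). P z y * g y))"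
    by (rule step.IH)
  also have "\<dots> = (\<Sum>y\<in>C (Suc k). (\<Sum>z\<in>C k. fwd P \<pi> C k z * P z y) * g y)"
    by (simp add: sum_distrib_left sum_distrib_right mult.assoc) (rule sum.swap)
  also have "\<dots> = (\<Sum>y\<in>C (Suc k). fwd P \<pi> C (Suc k) y * g y)"
    using step.hyps by (intro sum.cong) auto
  finally show ?case .
qed

lemma fwd_S:
  assumes S: "finite S" and sd: "stationary_distribution S P \<pi>"
    and C: "\<And>l. 1 \<le> l \<Longrightarrow> l < m \<Longrightarrow> C l = S" and m: "m \<ge> 1" and CS: "\<And>l. C l \<subseteq> S"
  shows "fwd P \<pi> C m y = (if y \<in> C m then \<pi> y else 0)"
  using m C
proof (induction m arbitrary: y rule: dec_induct)
  case base then show ?case by simp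
next
  case (step m)
  have Cm: "C m = S" using step by auto
  have "fwd P \<pi> C (Suc m) y = (if y \<in> C (Suc m) then (\<Sum>z\<in>S. \<pi> z * P z y) else 0)"
    using step.hyps Cm step.IH[of _] step.prems by (auto intro!: sum.cong)
  also have "\<dots> = (if y \<in> C (Suc m) then \<pi> y else 0)"
    using sd CS[of "Suc m"] unfolding stationary_distribution_def by auto
  finally show ?case .
qed

lemma mpow1:
  assumes "finite S" "x \<in> S"
  shows "mpow S P (Suc 0) x y = P x y"
proof -
  have "mpow S P (Suc 0) x y = (\<Sum>z\<in>S. if x = z then P z y else 0)" by (simp, intro sum.cong) auto
  thus ?thesis using assms by simp
qed

lemma fwd_mid:
  assumes S: "finite S" and sd: "stationary_distribution S P \<pi>" and i: "i \<ge> 1"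
    and CS: "\<And>l. C l \<subseteq> S"
    and Cpre: "\<And>l. 1 \<le> l \<Longrightarrow> l < i \<Longrightarrow> C l = S"
    and Cmid: "\<And>l. i < l \<Longrightarrow> l < i + j \<Longrightarrow> C l = S"
  shows "m \<le> j \<Longrightarrow> fwd P \<pi> C (i + m) y = (if y \<in> C (i + m) then (\<Sum>x\<in>C i. \<pi> x * mpow S P m x y) else 0)"
proof (induction m arbitrary: y)
  case 0
  have fin: "finite (C i)" using CS S finite_subset by blast
  have "fwd P \<pi> C i y = (if y \<in> C i then \<pi> y else 0)" by (rule fwd_S[OF S sd Cpre i CS])
  moreover have "(\<Sum>x\<in>C i. \<pi> x * mpow S P 0 x y) = (if y \<in> C i then \<pi> y else 0)"
    using fin by (simp add: if_distrib sum.delta' cong: if_cong)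
  ultimately show ?case by simp
next
  case (Suc m)
  have fin: "finite (C i)" using CS S finite_subset by blast
  have IH: "\<And>z. fwd P \<pi> C (i + m) z = (if z \<in> C (i + m) then (\<Sum>x\<in>C i. \<pi> x * mpow S P m x z) else 0)"
    using Suc by simp
  have e: "i + Suc m = Suc (i + m)" "i + m \<noteq> 0" using i by auto
  have "fwd P \<pi> C (i + Suc m) y = (if y \<in> C (i + Suc m) then
          (\<Sum>z\<in>C (i + m). (\<Sum>x\<in>C i. \<pi> x * mpow S P m x z) * P z y) else 0)"
    unfolding e(1) using e(2) IH by (auto intro!: sum.cong)
  also have "(\<Sum>z\<in>C (i + m). (\<Sum>x\<in>C i. \<pi> x * mpow S P m x z) * P z y) = (\<Sum>x\<in>C i. \<pi> x * mpow S P (Suc m) x y)"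
  proof (cases "m = 0")
    case True
    have "(\<Sum>z\<in>C (i + m). (\<Sum>x\<in>C i. \<pi> x * mpow S P m x z) * P z y) = (\<Sum>z\<in>C i. \<pi> z * P z y)"
      using True fin by (intro sum.cong) (auto simp: if_distrib sum.delta' cong: if_cong)
    also have "\<dots> = (\<Sum>x\<in>C i. \<pi> x * mpow S P (Suc m) x y)"
    proof (intro sum.cong refl)
      fix x assume x: "x \<in> C i"
      hence xS: "x \<in> S" using CS by auto
      show "\<pi> x * P x y = \<pi> x * mpow S P (Suc m) x y"
        unfolding True mpow1[OF S xS] ..
    qed
    finally show ?thesis .
  next
    case False
    have Cim: "C (i + m) = S" using Cmid[of "i + m"] False Suc.prems by simp
    have "(\<Sum>z\<in>C (i + m). (\<Sum>x\<in>C i. \<pi> x * mpow S P m x z) * P z y)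
        = (\<Sum>x\<in>C i. \<pi> x * (\<Sum>z\<in>S. mpow S P m x z * P z y))"
      unfolding Cim by (simp add: sum_distrib_left sum_distrib_right mult.assoc) (rule sum.swap)
    thus ?thesis by simp
  qed
  finally show ?case .
qed

lemma Z_event_sets:
  assumes "Z \<in> measurable M (count_space S)"
  shows "{\<omega>\<in>space M. Z \<omega> \<in> A} \<in> sets M"
proof -
  have "Z -` (A \<inter> S) \<inter> space M \<in> sets M" by (rule measurable_sets[OF assms]) auto
  moreover have "Z -` (A \<inter> S) \<inter> space M = {\<omega>\<in>space M. Z \<omega> \<in> A}"
    using measurable_space[OF assms] by auto
  ultimately show ?thesis by simp
qed

lemma cyl_measure:
  assumes mc: "markov_chain_rvs M S P \<pi> n Z" and S: "finite S" and k: "1 \<le> k" "k \<le> n"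
    and CS: "\<And>l. C l \<subseteq> S"
  shows "measure M {\<omega>\<in>space M. \<forall>l\<in>{1..k}. Z l \<omega> \<in> C l} = (\<Sum>x\<in>PiE {1..k} C. wpath P \<pi> k x)"
proof -
  have ps: "prob_space M" and meas: "\<And>l. l \<in> {1..n} \<Longrightarrow> Z l \<in> measurable M (count_space S)"
    and cyl: "\<And>x. (\<forall>i\<in>{1..k}. x i \<in> S) \<Longrightarrow> measure M {\<omega>\<in>space M. \<forall>i\<in>{1..k}. Z i \<omega> = x i}
          = \<pi> (x 1) * (\<Prod>i\<in>{1..<k}. P (x i) (x (Suc i)))"
    using mc k unfolding markov_chain_rvs_def by auto
  interpret prob_space M by (rule ps)
  define E where "E x = {\<omega>\<in>space M. \<forall>i\<in>{1..k}. Z i \<omega> = x i}" for x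
  have Esets: "E x \<in> sets M" for x
    unfolding E_def
  proof (rule sets.sets_Collect_finite_All)
    fix i assume i: "i \<in> {1..k}"
    show "{\<omega>\<in>space M. Z i \<omega> = x i} \<in> sets M"
      using Z_event_sets[OF meas[of i], of "{x i}"] i k by simp
  qed simp
  have U: "{\<omega>\<in>space M. \<forall>l\<in>{1..k}. Z l \<omega> \<in> C l} = (\<Union>x\<in>PiE {1..k} C. E x)"
  proof
    show "{\<omega>\<in>space M. \<forall>l\<in>{1..k}. Z l \<omega> \<in> C l} \<subseteq> (\<Union>x\<in>PiE {1..k} C. E x)"
    proof
      fix \<omega> assume w: "\<omega> \<in> {\<omega>\<in>space M. \<forall>l\<in>{1..k}. Z l \<omega> \<in> C l}"
      have "restrict (\<lambda>l. Z l \<omega>) {1..k} \<in> PiE {1..k} C" using w by auto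
      moreover have "\<omega> \<in> E (restrict (\<lambda>l. Z l \<omega>) {1..k})" using w unfolding E_def by auto
      ultimately show "\<omega> \<in> (\<Union>x\<in>PiE {1..k} C. E x)" by blast
    qed
    show "(\<Union>x\<in>PiE {1..k} C. E x) \<subseteq> {\<omega>\<in>space M. \<forall>l\<in>{1..k}. Z l \<omega> \<in> C l}"
      unfolding E_def by (auto simp: PiE_def)
  qed
  have disj: "disjoint_family_on E (PiE {1..k} C)"
    unfolding disjoint_family_on_def
  proof (intro ballI impI)
    fix x y assume x: "x \<in> PiE {1..k} C" and y: "y \<in> PiE {1..k} C" and xy: "x \<noteq> y"
    then obtain i where i: "i \<in> {1..k}" "x i \<noteq> y i"
      by (metis PiE_ext)
    show "E x \<inter> E y = {}" unfolding E_def using i by auto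
  qed
  have fin: "finite (PiE {1..k} C)"
    by (rule finite_PiE) (use S CS in \<open>auto intro: finite_subset\<close>)
  have "measure M {\<omega>\<in>space M. \<forall>l\<in>{1..k}. Z l \<omega> \<in> C l} = (\<Sum>x\<in>PiE {1..k} C. measure M (E x))"
    unfolding U by (rule measure_finite_Union[OF fin _ disj]) (use Esets emeasure_finite in auto)
  also have "\<dots> = (\<Sum>x\<in>PiE {1..k} C. wpath P \<pi> k x)"
  proof (rule sum.cong[OF refl])
    fix x assume x: "x \<in> PiE {1..k} C"
    hence "\<forall>i\<in>{1..k}. x i \<in> S" using CS by auto
    thus "measure M (E x) = wpath P \<pi> k x" unfolding E_def wpath_def by (rule cyl)
  qed
  finally show ?thesis .
qed

lemma Z_in_S:
  assumes mc: "markov_chain_rvs M S P \<pi> n Z" and "l \<in> {1..n}" "\<omega> \<in> space M"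
  shows "Z l \<omega> \<in> S"
  using measurable_space[of "Z l" M "count_space S" \<omega>] assms unfolding markov_chain_rvs_def by auto

lemma joint_measure:
  assumes mc: "markov_chain_rvs M S P \<pi> n Z" and S: "finite S" and sd: "stationary_distribution S P \<pi>"
    and i: "1 \<le> i" and j: "1 \<le> j" and ij: "i + j \<le> n" and A: "A \<subseteq> S" and B: "B \<subseteq> S"
  shows "measure M {\<omega>\<in>space M. Z i \<omega> \<in> B \<and> Z (i + j) \<omega> \<in> A}
       = (\<Sum>y\<in>A. \<Sum>x\<in>B. \<pi> x * mpow S P j x y)"
proof -
  define C where "C l = (if l = i then B else if l = i + j then A else S)" for l
  have CS: "C l \<subseteq> S" for l using A B unfolding C_def by auto
  have ev: "{\<omega>\<in>space M. Z i \<omega> \<in> B \<and> Z (i + j) \<omega> \<in> A} = {\<omega>\<in>space M. \<forall>l\<in>{1..i+j}. Z l \<omega> \<in> C l}"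
  proof (intro Collect_cong conj_cong refl)
    fix \<omega> assume w: "\<omega> \<in> space M"
    have "Z l \<omega> \<in> S" if "l \<in> {1..i+j}" for l using Z_in_S[OF mc _ w, of l] that ij by auto
    thus "(Z i \<omega> \<in> B \<and> Z (i + j) \<omega> \<in> A) = (\<forall>l\<in>{1..i + j}. Z l \<omega> \<in> C l)"
      using i j unfolding C_def by auto
  qed
  have "measure M {\<omega>\<in>space M. Z i \<omega> \<in> B \<and> Z (i + j) \<omega> \<in> A} = (\<Sum>x\<in>PiE {1..i+j} C. wpath P \<pi> (i + j) x)"
    unfolding ev by (rule cyl_measure[OF mc S _ ij CS]) (use i in simp)
  also have "\<dots> = (\<Sum>x\<in>PiE {1..i+j} C. wpath P \<pi> (i + j) x * (\<lambda>_. 1) (x (i + j)))" by simp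
  also have "\<dots> = (\<Sum>y\<in>C (i + j). fwd P \<pi> C (i + j) y * 1)"
    by (rule path_sum) (use i in simp)
  also have "\<dots> = (\<Sum>y\<in>C (i + j). \<Sum>x\<in>C i. \<pi> x * mpow S P j x y)"
    using fwd_mid[OF S sd i CS, where j=j and m=j] unfolding C_def by (intro sum.cong) auto
  also have "\<dots> = (\<Sum>y\<in>A. \<Sum>x\<in>B. \<pi> x * mpow S P j x y)" using j unfolding C_def by simp
  finally show ?thesis .
qed

lemma marginal_measure:
  assumes mc: "markov_chain_rvs M S P \<pi> n Z" and S: "finite S" and sd: "stationary_distribution S P \<pi>"
    and k: "1 \<le> k" "k \<le> n" and A: "A \<subseteq> S"
  shows "measure M {\<omega>\<in>space M. Z k \<omega> \<in> A} = (\<Sum>y\<in>A. \<pi> y)"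
proof -
  define C where "C l = (if l = k then A else S)" for l
  have CS: "C l \<subseteq> S" for l using A unfolding C_def by auto
  have ev: "{\<omega>\<in>space M. Z k \<omega> \<in> A} = {\<omega>\<in>space M. \<forall>l\<in>{1..k}. Z l \<omega> \<in> C l}"
  proof (intro Collect_cong conj_cong refl)
    fix \<omega> assume w: "\<omega> \<in> space M"
    have "Z l \<omega> \<in> S" if "l \<in> {1..k}" for l using Z_in_S[OF mc _ w, of l] that k by auto
    thus "(Z k \<omega> \<in> A) = (\<forall>l\<in>{1..k}. Z l \<omega> \<in> C l)"
      using k unfolding C_def by auto
  qed
  have "measure M {\<omega>\<in>space M. Z k \<omega> \<in> A} = (\<Sum>x\<in>PiE {1..k} C. wpath P \<pi> k x)"
    unfolding ev by (rule cyl_measure[OF mc S k CS])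
  also have "\<dots> = (\<Sum>x\<in>PiE {1..k} C. wpath P \<pi> k x * (\<lambda>_. 1) (x k))" by simp
  also have "\<dots> = (\<Sum>y\<in>C k. fwd P \<pi> C k y * 1)"
    by (rule path_sum) (use k in simp)
  also have "\<dots> = (\<Sum>y\<in>C k. \<pi> y)"
    using fwd_S[OF S sd _ k(1) CS] unfolding C_def by (intro sum.cong) auto
  also have "\<dots> = (\<Sum>y\<in>A. \<pi> y)" unfolding C_def by simp
  finally show ?thesis .
qed



lemma psi_le:
  assumes mc: "markov_chain_rvs M S P \<pi> n Z" and S: "finite S" and sd: "stationary_distribution S P \<pi>"
    and i: "1 \<le> i" and j: "1 \<le> j" and ij: "i + j \<le> n"
    and pos: "\<And>y. y \<in> S \<Longrightarrow> \<pi> y > 0"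
    and close: "\<And>x y. x \<in> S \<Longrightarrow> y \<in> S \<Longrightarrow> \<bar>mpow S P j x y - \<pi> y\<bar> \<le> \<pi> y / 4"
  shows "psi_coeff M S (Z (i + j)) (Z i) \<le> 1/4"
proof -
  have ps: "prob_space M" and meas: "\<And>l. l \<in> {1..n} \<Longrightarrow> Z l \<in> measurable M (count_space S)"
    using mc unfolding markov_chain_rvs_def by auto
  have fZ: "Z l \<in> space M \<rightarrow> space (count_space S)" if "l \<in> {1..n}" for l
    using measurable_space[OF meas[OF that]] by auto
  have m1: "i + j \<in> {1..n}" "i \<in> {1..n}" using i j ij by auto
  let ?X = "{\<bar>(measure M (A \<inter> B) - measure M A * measure M B) / (measure M A * measure M B)\<bar> | A B.
      A \<in> sets (vimage_algebra (space M) (Z (i + j)) (count_space S)) \<and>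
      B \<in> sets (vimage_algebra (space M) (Z i) (count_space S)) \<and>
      measure M A > 0 \<and> measure M B > 0}"
  have ne: "?X \<noteq> {}"
  proof -
    have "measure M (space M) = 1" using ps by (simp add: prob_space.prob_space)
    thus ?thesis using sets_vimage_algebra_space by fastforce
  qed
  have bound: "v \<le> 1/4" if v: "v \<in> ?X" for v
  proof -
    obtain A B where v: "v = \<bar>(measure M (A \<inter> B) - measure M A * measure M B) / (measure M A * measure M B)\<bar>"
      and A: "A \<in> sets (vimage_algebra (space M) (Z (i + j)) (count_space S))"
      and B: "B \<in> sets (vimage_algebra (space M) (Z i) (count_space S))"
      and pA: "measure M A > 0" and pB: "measure M B > 0" using v by blast
    obtain A' where A': "A' \<subseteq> S" "A = Z (i + j) -` A' \<inter> space M"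
      using A unfolding sets_vimage_algebra2[OF fZ[OF m1(1)]] by auto
    obtain B' where B': "B' \<subseteq> S" "B = Z i -` B' \<inter> space M"
      using B unfolding sets_vimage_algebra2[OF fZ[OF m1(2)]] by auto
    have Aeq: "A = {\<omega>\<in>space M. Z (i + j) \<omega> \<in> A'}" using A' by auto
    have Beq: "B = {\<omega>\<in>space M. Z i \<omega> \<in> B'}" using B' by auto
    have ABeq: "A \<inter> B = {\<omega>\<in>space M. Z i \<omega> \<in> B' \<and> Z (i + j) \<omega> \<in> A'}" using Aeq Beq by auto
    have mA: "measure M A = (\<Sum>y\<in>A'. \<pi> y)"
      unfolding Aeq by (rule marginal_measure[OF mc S sd _ _ A'(1)]) (use m1 in auto)
    have mB: "measure M B = (\<Sum>x\<in>B'. \<pi> x)"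
      unfolding Beq by (rule marginal_measure[OF mc S sd _ _ B'(1)]) (use m1 in auto)
    have mAB: "measure M (A \<inter> B) = (\<Sum>y\<in>A'. \<Sum>x\<in>B'. \<pi> x * mpow S P j x y)"
      unfolding ABeq by (rule joint_measure[OF mc S sd i j ij A'(1) B'(1)])
    have "measure M (A \<inter> B) - measure M A * measure M B = (\<Sum>y\<in>A'. \<Sum>x\<in>B'. \<pi> x * (mpow S P j x y - \<pi> y))"
    proof -
      have pr: "(\<Sum>y\<in>A'. \<pi> y) * (\<Sum>x\<in>B'. \<pi> x) = (\<Sum>y\<in>A'. \<Sum>x\<in>B'. \<pi> x * \<pi> y)"
        unfolding sum_distrib_right sum_distrib_left by (simp add: mult.commute, subst sum.swap, simp add: mult.commute)
      show ?thesis unfolding mAB mA mB pr by (simp add: right_diff_distrib sum_subtractf)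
    qed
    also have "\<bar>\<dots>\<bar> \<le> (\<Sum>y\<in>A'. \<Sum>x\<in>B'. \<bar>\<pi> x * (mpow S P j x y - \<pi> y)\<bar>)"
      by (rule order_trans[OF sum_abs sum_mono[OF sum_abs]])
    also have "\<dots> \<le> (\<Sum>y\<in>A'. \<Sum>x\<in>B'. \<pi> x * (\<pi> y / 4))"
    proof (intro sum_mono)
      fix y x assume y: "y \<in> A'" and x: "x \<in> B'"
      have xS: "x \<in> S" and yS: "y \<in> S" using x y A' B' by auto
      show "\<bar>\<pi> x * (mpow S P j x y - \<pi> y)\<bar> \<le> \<pi> x * (\<pi> y / 4)"
        using close[OF xS yS] pos[OF xS] by (simp add: abs_mult mult_left_mono)
    qed
    also have "\<dots> = measure M A * measure M B / 4"
      unfolding mA mB by (simp add: sum_product sum_divide_distrib mult.commute)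
    finally have "\<bar>measure M (A \<inter> B) - measure M A * measure M B\<bar> \<le> measure M A * measure M B / 4" .
    moreover have prodpos: "measure M A * measure M B > 0" using pA pB by simp
    ultimately have "\<bar>measure M (A \<inter> B) - measure M A * measure M B\<bar> / (measure M A * measure M B)
        \<le> (measure M A * measure M B / 4) / (measure M A * measure M B)"
      by (intro divide_right_mono) auto
    also have "\<dots> = 1/4" using pA pB by simp
    finally have fin: "\<bar>measure M (A \<inter> B) - measure M A * measure M B\<bar> / (measure M A * measure M B) \<le> 1/4" .
    have "v = \<bar>measure M (A \<inter> B) - measure M A * measure M B\<bar> / (measure M A * measure M B)"
      unfolding v by (rule abs_div_pos[OF prodpos, symmetric])
    thus ?thesis using fin by simp
  qed
  show ?thesis unfolding psi_coeff_def by (rule cSup_least[OF ne bound])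
qed

theorem propositionB:
  fixes M :: "'a measure" and S :: "'s set" and P :: "'s \<Rightarrow> 's \<Rightarrow> real"
    and \<pi> :: "'s \<Rightarrow> real" and n :: nat and Z :: "nat \<Rightarrow> 'a \<Rightarrow> 's"
  assumes "finite S" and "S \<noteq> {}"
    and "stochastic_matrix S P"
    and "ergodic_chain S P"
    and "stationary_distribution S P \<pi>"
    and "markov_chain_rvs M S P \<pi> n Z"
  shows "real (Psi_coeff M S n Z)
           \<le> (log 2 (1 / Min (\<pi> ` S)) + 3) * real (t_mix S P \<pi>)"
proof -
  note S = assms(1) and Sne = assms(2) and st = assms(3) and erg = assms(4) and sd = assms(5) and mc = assms(6)
  define T where "T = t_mix S P \<pi>"
  have Tp: "T \<ge> 1 \<and> dist_eq S P \<pi> T \<le> 1/4"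
    unfolding T_def t_mix_def by (rule LeastI_ex) (rule tmix_exists[OF S Sne st erg sd])
  have hT: "\<And>x x'. x \<in> S \<Longrightarrow> x' \<in> S \<Longrightarrow> L1 S (mpow S P T x) (mpow S P T x') \<le> 2 * (1/2)"
    using tmix_L1[OF S st sd] Tp by blast
  have dec: "\<And>x y. x \<in> S \<Longrightarrow> y \<in> S \<Longrightarrow> \<bar>mpow S P (k * T) x y - \<pi> y\<bar> \<le> (1/2) ^ k" for k
    by (rule pointwise_pi[OF S st sd]) (rule decay[OF S st _ hT], auto)
  have pis: "(\<Sum>x\<in>S. \<pi> x) = 1" "\<And>x. x \<in> S \<Longrightarrow> 0 \<le> \<pi> x"
    using sd unfolding stationary_distribution_def by auto
  obtain x0 where x0: "x0 \<in> S" "\<pi> x0 > 0"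
  proof -
    have "\<exists>x\<in>S. \<pi> x \<noteq> 0" using pis(1) by (metis sum.neutral zero_neq_one)
    thus ?thesis using pis(2) that by force
  qed
  have pos: "\<pi> y > 0" if y: "y \<in> S" for y
  proof -
    obtain t where t: "mpow S P t x0 y > 0" using erg x0 y unfolding ergodic_chain_def irreducible_chain_def by blast
    have "0 < \<pi> x0 * mpow S P t x0 y" using x0 t by simp
    also have "\<dots> \<le> (\<Sum>x\<in>S. \<pi> x * mpow S P t x y)"
      by (rule member_le_sum[OF x0(1)]) (use S pis(2) mpow_nonneg[OF st y] in auto)
    also have "\<dots> = \<pi> y" by (rule stat_mpow[OF S sd y])
    finally show ?thesis .
  qed
  define pm where "pm = Min (\<pi> ` S)"
  have pm_pos: "pm > 0" unfolding pm_def using S Sne pos by (subst Min_gr_iff) auto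
  have pm_le: "pm \<le> \<pi> y" if "y \<in> S" for y unfolding pm_def using S that by simp
  have pm1: "pm \<le> 1"
  proof -
    have "\<pi> x0 \<le> (\<Sum>x\<in>S. \<pi> x)" by (rule member_le_sum[OF x0(1)]) (use S pis(2) in auto)
    thus ?thesis using pm_le[OF x0(1)] pis(1) by simp
  qed
  define L where "L = log 2 (1 / pm)"
  have L0: "L \<ge> 0" unfolding L_def using pm_pos pm1 by simp
  define k where "k = nat \<lceil>L + 2\<rceil>"
  have kge: "real k \<ge> L + 2" unfolding k_def using L0 by linarith
  have kle: "real k \<le> L + 3" unfolding k_def using L0 by linarith
  have k1: "k \<ge> 1" using kge L0 by linarith
  have pow: "(1/2::real) ^ k \<le> pm / 4"
  proof -
    have "(2::real) powr (L + 2) \<le> 2 powr real k" using kge by simp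
    moreover have "(2::real) powr (L + 2) = 4 / pm"
      unfolding L_def using pm_pos by (simp add: powr_add)
    moreover have "(2::real) powr real k = 2 ^ k" by (simp add: powr_realpow)
    ultimately have "4 / pm \<le> 2 ^ k" by simp
    thus ?thesis using pm_pos by (simp add: power_one_over field_simps)
  qed
  define j where "j = k * T"
  have j1: "j \<ge> 1" unfolding j_def using k1 Tp by simp
  have close: "\<bar>mpow S P j x y - \<pi> y\<bar> \<le> \<pi> y / 4" if "x \<in> S" "y \<in> S" for x y
    using dec[OF that, of k] pow pm_le[OF that(2)] unfolding j_def by linarith
  have "Psi_coeff M S n Z \<le> j"
    unfolding Psi_coeff_def
  proof (rule Least_le, intro conjI ballI j1)
    fix i assume i: "i \<in> {1..n - j}"
    show "psi_coeff M S (Z (i + j)) (Z i) \<le> 1/4"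
      by (rule psi_le[OF mc S sd _ j1 _ pos close]) (use i in auto)
  qed
  hence "real (Psi_coeff M S n Z) \<le> real (k * T)" unfolding j_def by (simp only: of_nat_le_iff)
  also have "\<dots> = real k * real T" by simp
  also have "\<dots> \<le> (L + 3) * real T" using kle by (intro mult_right_mono) auto
  finally show ?thesis unfolding L_def pm_def T_def .
qed


end
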